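(* There is an absolute constant $\epsilon_0>0$ such that the following holds. Let $n\ge 2$, $\mathcal F\subseteq S_n$, $f=2\chi_{\mathcal F}-1$, $f_1$ its projection onto $U_1$, $\epsilon=\mathbb E[(f-f_1)^2]$ with $0<\epsilon<\epsilon_0$, and let $(X,Y)$ be a typical restriction. Choose $\alpha,\beta$ independently and uniformly from $T_{X,Y}$, and write $\alpha_1,\beta_1$ for their restrictions to $X$ and $\alpha_2,\beta_2$ for their restrictions to $[n]\setminus X$. Then with probability at least $1-8\epsilon^{2/7}$ one of the following holds: (a) $|g_1(\alpha_1)-g_1(\beta_1)|\le 2\epsilon^{1/7}$ and $|g_2(\alpha_2)-g_2(\beta_2)|\le2\epsilon^{1/7}$; (b) $|g_1(\alpha_1)-g_1(\beta_1)|\le 2\epsilon^{1/7}$ and $|g_2(\alpha_2)-g_2(\beta_2)|\in[2-2\epsilon^{1/7},2+2\epsilon^{1/7}]$; (c) $|g_1(\alpha_1)-g_1(\beta_1)|\in[2-2\epsilon^{1/7},2+2\epsilon^{1/7}]$ and $|g_2(\alpha_2)-g_2(\beta_2)|\le2\epsilon^{1/7}$.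
   Context: $S_n$ is the symmetric group on $[n]$; $T_{ij}$ is the indicator of $\{\pi:\pi(i)=j\}$; $U_1=\mathrm{span}\{T_{ij}\}$ with inner product $\langle f,g\rangle=\frac1{n!}\sum_\pi f(\pi)g(\pi)$. With $|\mathcal F|=c\,n!$, let $a_{ij}=(n-1)\langle f,T_{ij}\rangle-\frac{n-2}{n}(2c-1)$. A restriction is $(X,Y)$ with $X,Y\subseteq[n]$, $|X|=|Y|$; $T_{X,Y}=\{\pi:\pi(X)=Y\}$ with uniform measure. For $\pi\in T_{X,Y}$, $g_1(\pi)=\sum_{i\in X}a_{i\pi(i)}$ (depending only on $\pi|_X$), $g_2(\pi)=\sum_{i\notin X}a_{i\pi(i)}$ (depending only on $\pi|_{[n]\setminus X}$), $g=g_1+g_2$. A function $\phi$ is $(\delta,\epsilon)$-almost Boolean if $\Pr[||\phi|-1|\le\epsilon]\ge1-\delta$. A restriction is typical if: (a) $g$ is $(\epsilon^{4/7},\epsilon^{1/7})$-almost Boolean on $T_{X,Y}$; (b) $\mathbb E[g_1],\mathbb E[g_2]$ are within $\epsilon^{1/7}$ of $c-\frac12$; (c) $\mathbb E[(|g|-1)^2]\le\epsilon^{6/7}$. *)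

theory Defs
  imports Complex_Main "HOL-Combinatorics.Permutations"
begin

type_synonym perm_fun = "(nat \<Rightarrow> nat) \<Rightarrow> real"

text \<open>S_n: permutations of [n], represented as permutations of {0..<n}.\<close>
definition Sn :: "nat \<Rightarrow> (nat \<Rightarrow> nat) set" where
  "Sn n = {\<pi>. \<pi> permutes {..<n}}"

definition Tind :: "nat \<Rightarrow> nat \<Rightarrow> perm_fun" where
  "Tind i j \<pi> = (if \<pi> i = j then 1 else 0)"

definition ip :: "nat \<Rightarrow> perm_fun \<Rightarrow> perm_fun \<Rightarrow> real" where
  "ip n f g = (\<Sum>\<pi>\<in>Sn n. f \<pi> * g \<pi>) / fact n"

definition U1 :: "nat \<Rightarrow> perm_fun set" where
  "U1 n = {h. \<exists>c. \<forall>\<pi>\<in>Sn n. h \<pi> = (\<Sum>i<n. \<Sum>j<n. c i j * Tind i j \<pi>)}"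

text \<open>Orthogonal projection onto U_1 (unique on S_n).\<close>
definition proj_U1 :: "nat \<Rightarrow> perm_fun \<Rightarrow> perm_fun" where
  "proj_U1 n f = (SOME h. h \<in> U1 n \<and>
      (\<forall>i<n. \<forall>j<n. ip n (\<lambda>\<pi>. f \<pi> - h \<pi>) (Tind i j) = 0))"

definition fF :: "(nat \<Rightarrow> nat) set \<Rightarrow> perm_fun" where
  "fF F \<pi> = 2 * (if \<pi> \<in> F then 1 else 0) - 1"

definition epsF :: "nat \<Rightarrow> (nat \<Rightarrow> nat) set \<Rightarrow> real" where
  "epsF n F = (\<Sum>\<pi>\<in>Sn n. (fF F \<pi> - proj_U1 n (fF F) \<pi>)^2) / fact n"

definition cF :: "nat \<Rightarrow> (nat \<Rightarrow> nat) set \<Rightarrow> real" where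
  "cF n F = real (card F) / fact n"

definition acoef :: "nat \<Rightarrow> (nat \<Rightarrow> nat) set \<Rightarrow> nat \<Rightarrow> nat \<Rightarrow> real" where
  "acoef n F i j = (real n - 1) * ip n (fF F) (Tind i j)
                   - (real n - 2) / real n * (2 * cF n F - 1)"

definition TXY :: "nat \<Rightarrow> nat set \<Rightarrow> nat set \<Rightarrow> (nat \<Rightarrow> nat) set" where
  "TXY n X Y = {\<pi> \<in> Sn n. \<pi> ` X = Y}"

definition g1 :: "nat \<Rightarrow> (nat \<Rightarrow> nat) set \<Rightarrow> nat set \<Rightarrow> perm_fun" where
  "g1 n F X \<pi> = (\<Sum>i\<in>X. acoef n F i (\<pi> i))"

definition g2 :: "nat \<Rightarrow> (nat \<Rightarrow> nat) set \<Rightarrow> nat set \<Rightarrow> perm_fun" where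
  "g2 n F X \<pi> = (\<Sum>i\<in>{..<n} - X. acoef n F i (\<pi> i))"

definition gfun :: "nat \<Rightarrow> (nat \<Rightarrow> nat) set \<Rightarrow> nat set \<Rightarrow> perm_fun" where
  "gfun n F X \<pi> = g1 n F X \<pi> + g2 n F X \<pi>"

definition avg :: "'a set \<Rightarrow> ('a \<Rightarrow> real) \<Rightarrow> real" where
  "avg A \<phi> = (\<Sum>x\<in>A. \<phi> x) / real (card A)"

definition uprob :: "'a set \<Rightarrow> ('a \<Rightarrow> bool) \<Rightarrow> real" where
  "uprob A P = real (card {x\<in>A. P x}) / real (card A)"

definition almost_boolean :: "'a set \<Rightarrow> ('a \<Rightarrow> real) \<Rightarrow> real \<Rightarrow> real \<Rightarrow> bool" where
  "almost_boolean A \<phi> \<delta> e \<longleftrightarrow> uprob A (\<lambda>x. \<bar>\<bar>\<phi> x\<bar> - 1\<bar> \<le> e) \<ge> 1 - \<delta>"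

definition restriction :: "nat \<Rightarrow> nat set \<Rightarrow> nat set \<Rightarrow> bool" where
  "restriction n X Y \<longleftrightarrow> X \<subseteq> {..<n} \<and> Y \<subseteq> {..<n} \<and> card X = card Y"

definition typical :: "nat \<Rightarrow> (nat \<Rightarrow> nat) set \<Rightarrow> nat set \<Rightarrow> nat set \<Rightarrow> bool" where
  "typical n F X Y \<longleftrightarrow>
     (let \<epsilon> = epsF n F; T = TXY n X Y; c = cF n F in
       restriction n X Y \<and>
       almost_boolean T (gfun n F X) (\<epsilon> powr (4/7)) (\<epsilon> powr (1/7)) \<and>
       \<bar>avg T (g1 n F X) - (c - 1/2)\<bar> \<le> \<epsilon> powr (1/7) \<and>
       \<bar>avg T (g2 n F X) - (c - 1/2)\<bar> \<le> \<epsilon> powr (1/7) \<and>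
       avg T (\<lambda>\<pi>. (\<bar>gfun n F X \<pi>\<bar> - 1)^2) \<le> \<epsilon> powr (6/7))"

end

theory Submission
  imports Defs
begin

lemma key_real:
  fixes a b c e h :: real
  assumes "0 \<le> h" "h < 1/4" "\<bar>\<bar>a+c\<bar>-1\<bar> \<le> h" "\<bar>\<bar>b+c\<bar>-1\<bar> \<le> h" "\<bar>\<bar>a+e\<bar>-1\<bar> \<le> h" "\<bar>\<bar>b+e\<bar>-1\<bar> \<le> h"
  shows "(\<bar>a-b\<bar> \<le> 2*h \<and> \<bar>c-e\<bar> \<le> 2*h) \<or>
          (\<bar>a-b\<bar> \<le> 2*h \<and> 2 - 2*h \<le> \<bar>c-e\<bar> \<and> \<bar>c-e\<bar> \<le> 2 + 2*h) \<or>
          (2 - 2*h \<le> \<bar>a-b\<bar> \<and> \<bar>a-b\<bar> \<le> 2 + 2*h \<and> \<bar>c-e\<bar> \<le> 2*h)"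
  using assms by (simp add: abs_if split: if_splits) linarith?

definition mix :: "nat set \<Rightarrow> (nat \<Rightarrow> nat) \<Rightarrow> (nat \<Rightarrow> nat) \<Rightarrow> nat \<Rightarrow> nat" where
  "mix X a b = (\<lambda>i. if i \<in> X then a i else b i)"

lemma mix_mix: "mix X (mix X a b) (mix X b a) = a"
  by (auto simp: mix_def)

lemma mix_in_T:
  assumes r: "restriction n X Y" and a: "a \<in> TXY n X Y" and b: "b \<in> TXY n X Y"
  shows "mix X a b \<in> TXY n X Y"
proof -
  let ?U = "{..<n}"
  have X: "X \<subseteq> ?U" and Y: "Y \<subseteq> ?U" using r by (auto simp: restriction_def)
  have ap: "a permutes ?U" and aX: "a ` X = Y" using a by (auto simp: TXY_def Sn_def)
  have bp: "b permutes ?U" and bX: "b ` X = Y" using b by (auto simp: TXY_def Sn_def)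
  have ab: "bij_betw a X Y"
    using aX permutes_inj_on[OF ap] by (simp add: bij_betw_def inj_on_subset)
  have bU: "bij_betw b ?U ?U" using permutes_imp_bij[OF bp] .
  have bb: "bij_betw b (?U - X) (?U - Y)"
  proof -
    have "bij_betw b (?U - X) (b ` ?U - b ` X)"
      using bU X by (metis bij_betw_def bij_betw_subset Diff_subset image_set_diff
          inj_on_image_set_diff Diff_subset)
    moreover have "b ` ?U = ?U" using bU by (simp add: bij_betw_def)
    ultimately show ?thesis using bX by simp
  qed
  have m1: "bij_betw (mix X a b) X Y"
    using ab by (rule bij_betw_cong[THEN iffD1, rotated]) (auto simp: mix_def)
  have m2: "bij_betw (mix X a b) (?U - X) (?U - Y)"
    using bb by (rule bij_betw_cong[THEN iffD1, rotated]) (auto simp: mix_def)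
  have "bij_betw (mix X a b) (X \<union> (?U - X)) (Y \<union> (?U - Y))"
    by (rule bij_betw_combine[OF m1 m2]) auto
  moreover have "X \<union> (?U - X) = ?U" "Y \<union> (?U - Y) = ?U" using X Y by auto
  ultimately have "bij_betw (mix X a b) ?U ?U" by simp
  moreover have "\<forall>x. x \<notin> ?U \<longrightarrow> mix X a b x = x"
    using X permutes_not_in[OF bp] by (auto simp: mix_def)
  ultimately have "mix X a b permutes ?U" by (intro bij_imp_permutes) auto
  moreover have "mix X a b ` X = Y" using aX by (auto simp: mix_def)
  ultimately show ?thesis by (simp add: TXY_def Sn_def)
qed

lemma g1_mix: "g1 n F X (mix X a b) = g1 n F X a"
  by (simp add: g1_def mix_def)

lemma g2_mix: "g2 n F X (mix X a b) = g2 n F X b"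
  by (simp add: g2_def mix_def)

theorem lemma2p6:
  shows "\<exists>\<epsilon>0>0. \<forall>n::nat. \<forall>F X Y.
     n \<ge> 2 \<longrightarrow> F \<subseteq> Sn n \<longrightarrow>
     0 < epsF n F \<longrightarrow> epsF n F < \<epsilon>0 \<longrightarrow> typical n F X Y \<longrightarrow>
     (let \<epsilon> = epsF n F; T = TXY n X Y; d = 2 * \<epsilon> powr (1/7) in
       uprob (T \<times> T) (\<lambda>(\<alpha>, \<beta>).
          let d1 = \<bar>g1 n F X \<alpha> - g1 n F X \<beta>\<bar>; d2 = \<bar>g2 n F X \<alpha> - g2 n F X \<beta>\<bar> in
          (d1 \<le> d \<and> d2 \<le> d) \<or>
          (d1 \<le> d \<and> 2 - d \<le> d2 \<and> d2 \<le> 2 + d) \<or>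
          (2 - d \<le> d1 \<and> d1 \<le> 2 + d \<and> d2 \<le> d))
       \<ge> 1 - 8 * \<epsilon> powr (2/7))"
proof (intro exI[of _ "(1/4) powr 7"] conjI allI impI)
  show "(0::real) < (1/4) powr 7" by simp
  fix n :: nat and F X Y
  assume "2 \<le> n" "F \<subseteq> Sn n" and ep: "0 < epsF n F" and e0: "epsF n F < (1/4) powr 7"
    and ty: "typical n F X Y"
  define \<epsilon> where "\<epsilon> = epsF n F"
  define T where "T = TXY n X Y"
  define h where "h = \<epsilon> powr (1/7)"
  define \<delta> where "\<delta> = \<epsilon> powr (4/7)"
  define B where "B = {x\<in>T. \<bar>\<bar>gfun n F X x\<bar> - 1\<bar> \<le> h}"
  define P where "P = (\<lambda>(\<alpha>, \<beta>).
          let d1 = \<bar>g1 n F X \<alpha> - g1 n F X \<beta>\<bar>; d2 = \<bar>g2 n F X \<alpha> - g2 n F X \<beta>\<bar> in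
          (d1 \<le> 2*h \<and> d2 \<le> 2*h) \<or>
          (d1 \<le> 2*h \<and> 2 - 2*h \<le> d2 \<and> d2 \<le> 2 + 2*h) \<or>
          (2 - 2*h \<le> d1 \<and> d1 \<le> 2 + 2*h \<and> d2 \<le> 2*h))"
  have r: "restriction n X Y" and ab: "almost_boolean T (gfun n F X) \<delta> h"
    using ty by (simp_all add: typical_def Let_def \<epsilon>_def T_def h_def \<delta>_def)
  have h0: "0 \<le> h" by (simp add: h_def)
  have "h < ((1/4) powr 7) powr (1/7)"
    unfolding h_def \<epsilon>_def using ep e0 by (intro powr_less_mono2) auto
  also have "\<dots> = 1/4" by (subst powr_powr) simp
  finally have h4: "h < 1/4" .
  have e1: "\<epsilon> < 1"
  proof -
    have "((1::real)/4) powr 7 \<le> 1" by (simp add: power_le_one)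
    thus ?thesis using e0 \<epsilon>_def by linarith
  qed
  have \<delta>le: "4 * \<delta> \<le> 8 * \<epsilon> powr (2/7)"
  proof -
    have q: "\<epsilon> powr (2/7) \<le> 1" using ep e1 \<epsilon>_def by (intro powr_le1) auto
    have "\<delta> = \<epsilon> powr (2/7) * \<epsilon> powr (2/7)"
      by (simp add: \<delta>_def powr_add[symmetric])
    also have "\<dots> \<le> \<epsilon> powr (2/7)" using q by (intro mult_left_le) auto
    finally have "\<delta> \<le> \<epsilon> powr (2/7)" .
    moreover have "0 \<le> \<epsilon> powr (2/7)" by simp
    ultimately show ?thesis by linarith
  qed
  have \<delta>1: "\<delta> < 1"
  proof -
    have "\<epsilon> powr (4/7) < 1 powr (4/7)" using ep e1 \<epsilon>_def by (intro powr_less_mono2) auto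
    thus ?thesis by (simp add: \<delta>_def)
  qed
  have finT: "finite T"
  proof -
    have "T \<subseteq> Sn n" by (auto simp: T_def TXY_def)
    moreover have "finite (Sn n)" unfolding Sn_def by (rule finite_permutations) simp
    ultimately show ?thesis by (rule finite_subset)
  qed
  have BT: "B \<subseteq> T" by (auto simp: B_def)
  have cTpos: "card T > 0"
  proof (rule ccontr)
    assume "\<not> card T > 0"
    hence "card T = 0" by simp
    hence "uprob T (\<lambda>x. \<bar>\<bar>gfun n F X x\<bar> - 1\<bar> \<le> h) = 0" by (simp add: uprob_def)
    thus False using ab \<delta>1 by (simp add: almost_boolean_def)
  qed
  have cB: "real (card (T - B)) \<le> \<delta> * card T"
  proof -
    have "1 - \<delta> \<le> card B / card T" using ab by (simp add: almost_boolean_def uprob_def B_def)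
    hence "(1 - \<delta>) * card T \<le> card B" using cTpos by (simp add: pos_le_divide_eq)
    moreover have "card (T - B) = card T - card B" using BT finT by (simp add: card_Diff_subset finite_subset)
    moreover have "card B \<le> card T" using BT finT by (simp add: card_mono)
    ultimately show ?thesis by (simp add: algebra_simps of_nat_diff)
  qed
  define hh where "hh = (\<lambda>p::(nat\<Rightarrow>nat)\<times>(nat\<Rightarrow>nat). (mix X (fst p) (snd p), mix X (snd p) (fst p)))"
  have hhh: "hh (hh p) = p" for p by (simp add: hh_def mix_mix)
  have hT: "p \<in> T \<times> T \<Longrightarrow> hh p \<in> T \<times> T" for p
    using mix_in_T[OF r] by (auto simp: hh_def T_def)
  define A3 where "A3 = {p\<in>T\<times>T. fst (hh p) \<notin> B}"
  define A4 where "A4 = {p\<in>T\<times>T. snd (hh p) \<notin> B}"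
  have A3s: "A3 \<subseteq> hh ` ((T-B)\<times>T)"
  proof
    fix p assume "p \<in> A3"
    hence "hh p \<in> (T-B)\<times>T" using hT[of p] by (auto simp: A3_def mem_Times_iff)
    thus "p \<in> hh ` ((T-B)\<times>T)" by (metis hhh image_eqI)
  qed
  have A4s: "A4 \<subseteq> hh ` (T\<times>(T-B))"
  proof
    fix p assume "p \<in> A4"
    hence "hh p \<in> T\<times>(T-B)" using hT[of p] by (auto simp: A4_def mem_Times_iff)
    thus "p \<in> hh ` (T\<times>(T-B))" by (metis hhh image_eqI)
  qed
  have finTT: "finite (T\<times>T)" using finT by simp
  have cA3: "card A3 \<le> card (T-B) * card T"
  proof -
    have "card A3 \<le> card (hh ` ((T-B)\<times>T))" using A3s finT by (intro card_mono) auto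
    also have "\<dots> \<le> card ((T-B)\<times>T)" by (rule card_image_le) (use finT in auto)
    finally show ?thesis by (simp add: card_cartesian_product)
  qed
  have cA4: "card A4 \<le> card (T-B) * card T"
  proof -
    have "card A4 \<le> card (hh ` (T\<times>(T-B)))" using A4s finT by (intro card_mono) auto
    also have "\<dots> \<le> card (T\<times>(T-B))" by (rule card_image_le) (use finT in auto)
    finally show ?thesis by (simp add: card_cartesian_product mult.commute)
  qed
  define G where "G = {p\<in>T\<times>T. P p}"
  have bad: "T\<times>T - G \<subseteq> ((T-B)\<times>T) \<union> (T\<times>(T-B)) \<union> A3 \<union> A4"
  proof
    fix p assume p: "p \<in> T\<times>T - G"
    obtain \<alpha> \<beta> where pe: "p = (\<alpha>, \<beta>)" by (cases p)
    show "p \<in> ((T-B)\<times>T) \<union> (T\<times>(T-B)) \<union> A3 \<union> A4"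
    proof (rule ccontr)
      assume nn: "p \<notin> ((T-B)\<times>T) \<union> (T\<times>(T-B)) \<union> A3 \<union> A4"
      have \<alpha>T: "\<alpha> \<in> T" and \<beta>T: "\<beta> \<in> T" using p pe by auto
      have "\<alpha> \<in> B" "\<beta> \<in> B" "mix X \<alpha> \<beta> \<in> B" "mix X \<beta> \<alpha> \<in> B"
        using nn p pe by (auto simp: A3_def A4_def hh_def)
      hence c1: "\<bar>\<bar>g1 n F X \<alpha> + g2 n F X \<alpha>\<bar> - 1\<bar> \<le> h"
        and c2: "\<bar>\<bar>g1 n F X \<beta> + g2 n F X \<beta>\<bar> - 1\<bar> \<le> h"
        and c3: "\<bar>\<bar>g1 n F X \<alpha> + g2 n F X \<beta>\<bar> - 1\<bar> \<le> h"
        and c4: "\<bar>\<bar>g1 n F X \<beta> + g2 n F X \<alpha>\<bar> - 1\<bar> \<le> h"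
        by (auto simp: B_def gfun_def g1_mix g2_mix)
      have "P p" unfolding pe P_def Let_def
        using key_real[OF h0 h4 c1 c4 c3 c2] by simp
      thus False using p by (simp add: G_def)
    qed
  qed
  define S1 where "S1 = (T-B)\<times>T"
  define S2 where "S2 = T\<times>(T-B)"
  have u1: "card (T\<times>T - G) \<le> card (S1 \<union> S2 \<union> A3 \<union> A4)"
    using bad finT unfolding S1_def S2_def by (intro card_mono) (auto simp: A3_def A4_def)
  have u2: "card (S1 \<union> S2 \<union> A3 \<union> A4) \<le> card (S1 \<union> S2 \<union> A3) + card A4" by (rule card_Un_le)
  have u3: "card (S1 \<union> S2 \<union> A3) \<le> card (S1 \<union> S2) + card A3" by (rule card_Un_le)
  have u4: "card (S1 \<union> S2) \<le> card S1 + card S2" by (rule card_Un_le)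
  have s1: "card S1 = card (T-B) * card T" unfolding S1_def by (rule card_cartesian_product)
  have s2: "card S2 = card (T-B) * card T" unfolding S2_def card_cartesian_product by (rule mult.commute)
  have nb: "card (T\<times>T - G) \<le> 4 * (card (T-B) * card T)"
    using u1 u2 u3 u4 s1 s2 cA3 cA4 by linarith
  have GTT: "G \<subseteq> T\<times>T" by (auto simp: G_def)
  have cTT: "card (T\<times>T) = card T * card T" by (rule card_cartesian_product)
  have nd: "card (T\<times>T - G) = card T * card T - card G"
    using card_Diff_subset[OF finite_subset[OF GTT finTT] GTT] cTT by simp
  have nG: "card G \<le> card T * card T" using card_mono[OF finTT GTT] cTT by simp
  have r1: "real (card T * card T) - real (card G) \<le> real (4 * (card (T-B) * card T))"
  proof -
    have "real (card T * card T - card G) \<le> real (4 * (card (T-B) * card T))"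
      using nb nd by (simp only: of_nat_le_iff)
    thus ?thesis using nG by (simp add: of_nat_diff)
  qed
  have r2: "real (4 * (card (T-B) * card T)) \<le> 4 * (\<delta> * card T) * card T"
  proof -
    have "real (card (T-B)) * real (card T) \<le> (\<delta> * card T) * card T"
      using cB by (intro mult_right_mono) auto
    thus ?thesis by simp
  qed
  have "(1 - 4*\<delta>) * (real (card T) * card T) \<le> card G"
    using r1 r2 by (simp add: algebra_simps)
  hence "1 - 4*\<delta> \<le> card G / (real (card T) * card T)"
    using cTpos by (simp add: pos_le_divide_eq)
  hence "1 - 8 * \<epsilon> powr (2/7) \<le> uprob (T\<times>T) P"
    using \<delta>le by (simp add: uprob_def G_def card_cartesian_product)
  thus "let \<epsilon> = epsF n F; T = TXY n X Y; d = 2 * \<epsilon> powr (1/7) in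
       uprob (T \<times> T) (\<lambda>(\<alpha>, \<beta>).
          let d1 = \<bar>g1 n F X \<alpha> - g1 n F X \<beta>\<bar>; d2 = \<bar>g2 n F X \<alpha> - g2 n F X \<beta>\<bar> in
          (d1 \<le> d \<and> d2 \<le> d) \<or>
          (d1 \<le> d \<and> 2 - d \<le> d2 \<and> d2 \<le> 2 + d) \<or>
          (2 - d \<le> d1 \<and> d1 \<le> 2 + d \<and> d2 \<le> d))
       \<ge> 1 - 8 * \<epsilon> powr (2/7)"
    by (simp add: Let_def P_def \<epsilon>_def T_def h_def)
qed

end
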